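(* Let $N\ge1$, and let $A_n\to A$ in $M_N(\mathbb{C})$. Then $\liminf_{n\to\infty}\psi(A_n)\ge\psi(A)$.
   Context: $M_N(\mathbb{C})$ denotes the algebra of complex $N\times N$ matrices acting on $\mathbb{C}^N$ with the Euclidean inner product, equipped with the operator norm. For $A\in M_N(\mathbb{C})$, the numerical range is $W(A):=\{\langle Ax,x\rangle: x\in\mathbb{C}^N,\ \|x\|=1\}$. The Crouzeix ratio of $A$ is $\psi(A):=\sup\{\|p(A)\|: p \text{ a polynomial with } |p|\le 1 \text{ on } W(A)\}$. *)

theory Defs
  imports "HOL-Analysis.Analysis" "HOL-Computational_Algebra.Polynomial" "HOL-Library.Extended_Real"
begin

text \<open>Complex N x N matrices are modelled as complex ^ 'n ^ 'n with 'n a finite type (N = CARD('n) \<ge> 1).\<close>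

definition cinner :: "complex ^ 'n::finite \<Rightarrow> complex ^ 'n \<Rightarrow> complex" where
  "cinner x y = (\<Sum>i\<in>UNIV. x $ i * cnj (y $ i))"

definition numerical_range :: "complex ^ 'n ^ 'n::finite \<Rightarrow> complex set" where
  "numerical_range A = {cinner (A *v x) x | x. norm x = 1}"

primrec matpow :: "complex ^ 'n ^ 'n::finite \<Rightarrow> nat \<Rightarrow> complex ^ 'n ^ 'n" where
  "matpow A 0 = mat 1"
| "matpow A (Suc k) = A ** matpow A k"

definition poly_mat :: "complex poly \<Rightarrow> complex ^ 'n ^ 'n::finite \<Rightarrow> complex ^ 'n ^ 'n" where
  "poly_mat p A = (\<chi> i j. \<Sum>k\<le>degree p. coeff p k * matpow A k $ i $ j)"

definition op_norm :: "complex ^ 'n ^ 'n::finite \<Rightarrow> real" where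
  "op_norm M = onorm (\<lambda>x. M *v x)"

text \<open>Crouzeix ratio (as an extended real, the supremum being taken without presupposing finiteness).\<close>
definition crouzeix_ratio :: "complex ^ 'n ^ 'n::finite \<Rightarrow> ereal" where
  "crouzeix_ratio A = (SUP p\<in>{p. \<forall>z\<in>numerical_range A. cmod (poly p z) \<le> 1}. ereal (op_norm (poly_mat p A)))"

end

theory Submission
  imports Defs
begin
lemma matpow_tendsto:
  fixes A :: "nat \<Rightarrow> complex ^ 'n ^ 'n::finite"
  assumes "A \<longlonglongrightarrow> B"
  shows "(\<lambda>n. matpow (A n) k) \<longlonglongrightarrow> matpow B k"
proof (induction k)
  case 0 then show ?case by simp
next
  case (Suc k)
  show ?case unfolding matpow.simps matrix_matrix_mult_def
    by (intro tendsto_intros assms Suc)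
qed

lemma poly_mat_tendsto:
  fixes A :: "nat \<Rightarrow> complex ^ 'n ^ 'n::finite"
  assumes "A \<longlonglongrightarrow> B"
  shows "(\<lambda>n. poly_mat p (A n)) \<longlonglongrightarrow> poly_mat p B"
  unfolding poly_mat_def by (intro tendsto_intros matpow_tendsto assms)

lemma mv_tendsto:
  fixes A :: "nat \<Rightarrow> complex ^ 'n ^ 'n::finite"
  assumes "A \<longlonglongrightarrow> B"
  shows "(\<lambda>n. A n *v x) \<longlonglongrightarrow> B *v x"
  unfolding matrix_vector_mult_def by (intro tendsto_intros assms)

lemma g_cont:
  "continuous_on UNIV (\<lambda>z::((complex^'n::finite^'n) \<times> (complex^'n)). poly p (cinner (fst z *v snd z) (snd z)))"
  unfolding cinner_def matrix_vector_mult_def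
  by (intro continuous_intros)

lemma poly_mat_smult:
  "poly_mat (smult (complex_of_real c) p) M *v x = c *\<^sub>R (poly_mat p M *v x)"
proof (cases "c = 0")
  case True then show ?thesis by (simp add: poly_mat_def vec_eq_iff matrix_vector_mult_def)
next
  case False
  then show ?thesis
    apply (simp add: poly_mat_def vec_eq_iff matrix_vector_mult_def degree_smult_eq)
    apply (simp add: scaleR_conv_of_real sum_distrib_left sum_distrib_right mult_ac)
    done
qed

lemma key_ineq:
  fixes s t e :: real
  assumes "t < s" "e = (s - t) / (\<bar>t\<bar> + 1)"
  shows "t \<le> s / (1 + e)"
proof -
  have e0: "e > 0" using assms by simp
  show ?thesis
  proof (cases "t \<ge> 0")
    case True
    have "t * e \<le> s - t"
    proof -
      have ee: "e = (s - t) / (t + 1)" using assms True by simp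
      have "t + 1 \<noteq> 0" using True by simp
      then have "t * e = (s - t) * (t / (t + 1))" unfolding ee by (simp add: field_simps)
      also have "\<dots> \<le> (s - t) * 1"
        using True assms(1) by (intro mult_left_mono) auto
      finally show ?thesis by simp
    qed
    then have "t * (1 + e) \<le> s" by (simp add: algebra_simps)
    then show ?thesis using e0 by (simp add: pos_le_divide_eq)
  next
    case False
    show ?thesis
    proof (cases "s \<ge> 0")
      case True then show ?thesis using False e0 by (smt (verit) divide_nonneg_pos)
    next
      case F2: False
      have "s * (1 + e) \<le> s" using F2 e0 by (simp add: algebra_simps mult_nonpos_nonneg less_imp_le mult_nonneg_nonpos)
      then have "s \<le> s / (1 + e)" using e0 by (simp add: pos_le_divide_eq)
      then show ?thesis using assms(1) by simp
    qed
  qed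
qed

theorem theorem2p1:
  fixes A :: "nat \<Rightarrow> complex ^ 'n ^ 'n::finite" and B :: "complex ^ 'n ^ 'n"
  assumes "A \<longlonglongrightarrow> B"
  shows "liminf (\<lambda>n. crouzeix_ratio (A n)) \<ge> crouzeix_ratio B"
  unfolding crouzeix_ratio_def[of B]
proof (rule SUP_least)
  fix p assume "p \<in> {p. \<forall>z\<in>numerical_range B. cmod (poly p z) \<le> 1}"
  hence pB: "\<And>x. norm x = 1 \<Longrightarrow> cmod (poly p (cinner (B *v x) x)) \<le> 1"
    by (auto simp: numerical_range_def)
  show "ereal (op_norm (poly_mat p B)) \<le> liminf (\<lambda>n. crouzeix_ratio (A n))"
  proof (rule dense_le)
    fix y assume y: "y < ereal (op_norm (poly_mat p B))"
    show "y \<le> liminf (\<lambda>n. crouzeix_ratio (A n))"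
    proof (cases y)
      case MInf then show ?thesis by simp
    next
      case PInf with y show ?thesis by simp
    next
      case (real t)
      define r where "r = op_norm (poly_mat p B)"
      have tr: "t < r" using y real r_def by simp
      define s where "s = (t + r) / 2"
      have sr: "t < s" "s < r" using tr s_def by auto
      have "\<not> (\<forall>x. norm (poly_mat p B *v x) \<le> s * norm x)"
      proof
        assume "\<forall>x. norm (poly_mat p B *v x) \<le> s * norm x"
        then have "r \<le> s" unfolding r_def op_norm_def by (intro onorm_le) auto
        with sr show False by simp
      qed
      then obtain x where x: "norm (poly_mat p B *v x) > s * norm x" by (auto simp: not_le)
      have x0: "x \<noteq> 0" using x by auto
      have ev1: "eventually (\<lambda>n. norm (poly_mat p (A n) *v x) > s * norm x) sequentially"
        using order_tendstoD(1)[OF tendsto_norm[OF mv_tendsto[OF poly_mat_tendsto[OF assms]]] x] .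
      define e where "e = (s - t) / (\<bar>t\<bar> + 1)"
      have e0: "e > 0" using sr e_def by simp
      have tse: "t \<le> s / (1 + e)" using key_ineq[OF sr(1) e_def] .
      define S where "S = cball B 1 \<times> sphere (0::complex^'n) 1"
      define g where "g = (\<lambda>z::((complex^'n^'n) \<times> (complex^'n)). poly p (cinner (fst z *v snd z) (snd z)))"
      have "compact S" unfolding S_def by (intro compact_Times compact_cball compact_sphere)
      moreover have "continuous_on S g" unfolding g_def
        using g_cont continuous_on_subset by blast
      ultimately have "uniformly_continuous_on S g" by (rule compact_uniformly_continuous[rotated])
      then obtain d where d0: "d > 0" and d: "\<And>z z'. z \<in> S \<Longrightarrow> z' \<in> S \<Longrightarrow> dist z' z < d \<Longrightarrow> dist (g z') (g z) < e"
        unfolding uniformly_continuous_on_def using e0 by metis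
      have ev2: "eventually (\<lambda>n. dist (A n) B < min d 1) sequentially"
        using tendstoD[OF assms, of "min d 1"] d0 by simp
      show ?thesis unfolding real
      proof (rule Liminf_bounded)
        show "eventually (\<lambda>n. ereal t \<le> crouzeix_ratio (A n)) sequentially"
          using ev1 ev2
        proof eventually_elim
          case (elim n)
          define q where "q = smult (complex_of_real (1/(1+e))) p"
          have adm: "\<forall>z\<in>numerical_range (A n). cmod (poly q z) \<le> 1"
          proof
            fix z assume "z \<in> numerical_range (A n)"
            then obtain u where u: "norm u = 1" "z = cinner (A n *v u) u"
              by (auto simp: numerical_range_def)
            have inS: "(A n, u) \<in> S" "(B, u) \<in> S" using u elim
              by (auto simp: S_def dist_commute)
            have "dist (A n, u) (B, u) = dist (A n) B" by (simp add: dist_Pair_Pair)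
            with elim have "dist (A n, u) (B, u) < d" by simp
            then have "dist (g (A n, u)) (g (B, u)) < e" using d inS by blast
            then have "cmod (poly p z - poly p (cinner (B *v u) u)) < e"
              by (simp add: g_def u dist_norm)
            moreover have "cmod (poly p z) \<le> cmod (poly p z - poly p (cinner (B *v u) u)) + cmod (poly p (cinner (B *v u) u))"
              by (metis norm_triangle_sub add.commute)
            ultimately have "cmod (poly p z) \<le> 1 + e" using pB[OF u(1)] by simp
            then show "cmod (poly q z) \<le> 1"
            proof -
              have "poly q z = complex_of_real (1/(1+e)) * poly p z"
                by (simp only: q_def poly_smult)
              then have "cmod (poly q z) = \<bar>1/(1+e)\<bar> * cmod (poly p z)"
                by (simp only: norm_mult norm_of_real)
              also have "\<dots> = cmod (poly p z) / (1 + e)" using e0 by simp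
              finally show ?thesis using e0 \<open>cmod (poly p z) \<le> 1 + e\<close> by simp
            qed
          qed
          have "ereal (op_norm (poly_mat q (A n))) \<le> crouzeix_ratio (A n)"
            unfolding crouzeix_ratio_def by (rule SUP_upper) (use adm in auto)
          moreover have "op_norm (poly_mat q (A n)) = (1/(1+e)) * op_norm (poly_mat p (A n))"
            unfolding op_norm_def q_def poly_mat_smult
            using e0 by (simp add: onorm_scaleR[OF matrix_vector_mul_bounded_linear])
          moreover have "s < op_norm (poly_mat p (A n))"
          proof -
            have "s < norm (poly_mat p (A n) *v x) / norm x" using elim x0 by (simp add: pos_less_divide_eq)
            also have "\<dots> \<le> op_norm (poly_mat p (A n))" unfolding op_norm_def
              by (rule le_onorm) simp
            finally show ?thesis .
          qed
          ultimately have "s / (1 + e) \<le> op_norm (poly_mat q (A n))"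
            using e0 by (simp add: divide_right_mono)
          with tse have "t \<le> op_norm (poly_mat q (A n))" by linarith
          with \<open>ereal (op_norm (poly_mat q (A n))) \<le> crouzeix_ratio (A n)\<close>
          show ?case by (metis ereal_less_eq(3) order_trans)
        qed
      qed
    qed
  qed
qed
end
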